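(* Let $n>2r\ge 4$, let $G=\mathrm{S}_n$ acting on $\Omega=\binom{[n]}{r}$, let $\mathcal{B}_i=\{\alpha_1,\dots,\alpha_i\}\subseteq\Omega$, and let $G_i=G_{(\mathcal{B}_i)}$ be its pointwise stabiliser. Let $\alpha\in\Omega$. Then $|\alpha^{G_i}|$ is maximal among the orbit sizes $|\beta^{G_i}|$, $\beta\in\Omega$, if and only if there is a possible output $\alpha_{i+1}$ of $\mathtt{MetaGreedy}(\mathcal{B}_i)$ such that $(G_i)_\alpha\cong (G_i)_{\alpha_{i+1}}$.
   Context: For $u\in[n]$ let $N_{\mathcal{B}_i}(u)=\{\alpha\in\mathcal{B}_i : u\in\alpha\}$. The procedure $\mathtt{MetaGreedy}(\mathcal{B}_i)$ is: set $M_0=\emptyset$; for $j=1,\dots,r$, choose $m_j\in[n]\setminus M_{j-1}$ to be any point from any $G_i$-orbit $\Delta\subseteq[n]$ that maximises $\frac{|\Delta\setminus M_{j-1}|}{|\Delta\cap M_{j-1}|+1}$, and if this maximum value equals $1$ then additionally choose $m_j$ to be such a point with smallest neighbourhood size $|N_{\mathcal{B}_i}(m_j)|$; set $M_j=M_{j-1}\cup\{m_j\}$. The output is $\alpha_{i+1}=M_r$. Different choices give different possible outputs. *)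

theory Defs
  imports Complex_Main "HOL-Algebra.Sym_Groups"
begin

definition Omega :: "nat \<Rightarrow> nat \<Rightarrow> nat set set" where
  "Omega n r = {a. a \<subseteq> {1..n} \<and> card a = r}"

definition ptstab :: "nat \<Rightarrow> nat set set \<Rightarrow> (nat \<Rightarrow> nat) set" where
  "ptstab n B = {p \<in> carrier (sym_group n). \<forall>b\<in>B. p ` b = b}"

definition set_orbit :: "(nat \<Rightarrow> nat) set \<Rightarrow> nat set \<Rightarrow> nat set set" where
  "set_orbit H a = (\<lambda>p. p ` a) ` H"

definition set_stab :: "(nat \<Rightarrow> nat) set \<Rightarrow> nat set \<Rightarrow> (nat \<Rightarrow> nat) set" where
  "set_stab H a = {p \<in> H. p ` a = a}"

definition perm_grp :: "nat \<Rightarrow> (nat \<Rightarrow> nat) set \<Rightarrow> (nat \<Rightarrow> nat) monoid" where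
  "perm_grp n H = (sym_group n)\<lparr>carrier := H\<rparr>"

definition pt_orbits :: "nat \<Rightarrow> nat set set \<Rightarrow> nat set set" where
  "pt_orbits n B = {{p x | p. p \<in> ptstab n B} | x. x \<in> {1..n}}"

definition nbhd :: "nat set set \<Rightarrow> nat \<Rightarrow> nat set set" where
  "nbhd B u = {a \<in> B. u \<in> a}"

definition score :: "nat set \<Rightarrow> nat set \<Rightarrow> real" where
  "score D M = real (card (D - M)) / (real (card (D \<inter> M)) + 1)"

definition max_score :: "nat \<Rightarrow> nat set set \<Rightarrow> nat set \<Rightarrow> real" where
  "max_score n B M = Max ((\<lambda>D. score D M) ` pt_orbits n B)"

definition greedy_cands :: "nat \<Rightarrow> nat set set \<Rightarrow> nat set \<Rightarrow> nat set" where
  "greedy_cands n B M = {m \<in> {1..n} - M. \<exists>D \<in> pt_orbits n B. m \<in> D \<and> score D M = max_score n B M}"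

definition greedy_step :: "nat \<Rightarrow> nat set set \<Rightarrow> nat set \<Rightarrow> nat \<Rightarrow> bool" where
  "greedy_step n B M m \<longleftrightarrow> m \<in> greedy_cands n B M \<and>
     (max_score n B M = 1 \<longrightarrow> (\<forall>m' \<in> greedy_cands n B M. card (nbhd B m) \<le> card (nbhd B m')))"

definition metagreedy_output :: "nat \<Rightarrow> nat \<Rightarrow> nat set set \<Rightarrow> nat set \<Rightarrow> bool" where
  "metagreedy_output n r B a \<longleftrightarrow> (\<exists>ms. length ms = r \<and>
     (\<forall>j<r. greedy_step n B (set (take j ms)) (ms ! j)) \<and> a = set ms)"

end

theory Submission
  imports Defs "HOL-Algebra.Group_Action"
begin
definition atm :: "nat \<Rightarrow> nat set set \<Rightarrow> nat \<Rightarrow> nat set" where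
  "atm n B x = {y \<in> {1..n}. \<forall>b\<in>B. y \<in> b \<longleftrightarrow> x \<in> b}"

lemma atm_self: "x \<in> {1..n} \<Longrightarrow> x \<in> atm n B x"
  by (simp add: atm_def)

lemma atm_sub: "atm n B x \<subseteq> {1..n}"
  unfolding atm_def by blast

lemma atm_eq: "x \<in> {1..n} \<Longrightarrow> y \<in> atm n B x \<Longrightarrow> atm n B y = atm n B x"
  unfolding atm_def by blast

lemma atm_iff: "x \<in> {1..n} \<Longrightarrow> y \<in> {1..n} \<Longrightarrow> y \<in> atm n B x \<longleftrightarrow> atm n B y = atm n B x"
  using atm_eq[of x n y B] atm_self[of y n B] by blast

lemma atm_disj: "x \<in> {1..n} \<Longrightarrow> y \<in> {1..n} \<Longrightarrow> atm n B x \<noteq> atm n B y \<Longrightarrow> atm n B x \<inter> atm n B y = {}"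
  using atm_eq by (metis disjoint_iff)

lemma ptstab_char:
  assumes "\<forall>b\<in>B. b \<subseteq> {1..n}"
  shows "p \<in> ptstab n B \<longleftrightarrow> p permutes {1..n} \<and> (\<forall>x\<in>{1..n}. p x \<in> atm n B x)"
proof
  assume p: "p \<in> ptstab n B"
  hence pp: "p permutes {1..n}" and fx: "\<forall>b\<in>B. p ` b = b"
    by (auto simp: ptstab_def sym_group_carrier)
  have inj: "inj p" using permutes_inj[OF pp] .
  show "p permutes {1..n} \<and> (\<forall>x\<in>{1..n}. p x \<in> atm n B x)"
  proof (intro conjI ballI pp)
    fix x assume x: "x \<in> {1..n}"
    have "p x \<in> {1..n}" using permutes_in_image[OF pp] x by simp
    moreover have "p x \<in> b \<longleftrightarrow> x \<in> b" if "b \<in> B" for b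
    proof -
      have "p x \<in> p ` b \<longleftrightarrow> x \<in> b" using inj by (simp add: inj_image_mem_iff)
      thus ?thesis using fx that by simp
    qed
    ultimately show "p x \<in> atm n B x" unfolding atm_def by blast
  qed
next
  assume "p permutes {1..n} \<and> (\<forall>x\<in>{1..n}. p x \<in> atm n B x)"
  hence pp: "p permutes {1..n}" and t: "\<forall>x\<in>{1..n}. p x \<in> atm n B x" by auto
  have "p ` b = b" if b: "b \<in> B" for b
  proof
    show "p ` b \<subseteq> b"
    proof
      fix y assume "y \<in> p ` b"
      then obtain x where x: "x \<in> b" "y = p x" by auto
      have xs: "x \<in> {1..n}" using assms b x by blast
      show "y \<in> b" using t xs x b unfolding atm_def by blast
    qed
  next
    show "b \<subseteq> p ` b"
    proof
      fix y assume y: "y \<in> b"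
      have ys: "y \<in> {1..n}" using assms b y by blast
      define x where "x = inv' p y"
      have px: "p x = y" unfolding x_def using pp by (meson permutes_inverses(1))
      have xs: "x \<in> {1..n}" unfolding x_def using permutes_in_image[OF permutes_inv[OF pp], of y] ys by blast
      have "x \<in> b" using t xs px y b unfolding atm_def by blast
      thus "y \<in> p ` b" using px by force
    qed
  qed
  thus "p \<in> ptstab n B" using pp by (simp add: ptstab_def sym_group_carrier)
qed

lemma pt_orbits_eq:
  assumes "\<forall>b\<in>B. b \<subseteq> {1..n}"
  shows "pt_orbits n B = atm n B ` {1..n}"
proof -
  have "{p x | p. p \<in> ptstab n B} = atm n B x" if x: "x \<in> {1..n}" for x
  proof
    show "{p x | p. p \<in> ptstab n B} \<subseteq> atm n B x"
      using ptstab_char[OF assms] x by auto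
  next
    show "atm n B x \<subseteq> {p x | p. p \<in> ptstab n B}"
    proof
      fix y assume y: "y \<in> atm n B x"
      have ys: "y \<in> {1..n}" using y atm_sub by blast
      let ?p = "Transposition.transpose x y"
      have "?p permutes {1..n}" using x ys by (simp add: permutes_swap_id)
      moreover have "\<forall>z\<in>{1..n}. ?p z \<in> atm n B z"
      proof
        fix z assume z: "z \<in> {1..n}"
        show "?p z \<in> atm n B z"
        proof (cases "z = x")
          case True thus ?thesis using y by simp
        next
          case False
          show ?thesis
          proof (cases "z = y")
            case True
            have "x \<in> atm n B y" using y x unfolding atm_def by blast
            thus ?thesis using True False by simp
          next
            case False2: False
            thus ?thesis using False z atm_self by (simp add: transpose_def)
          qed
        qed
      qed
      ultimately have "?p \<in> ptstab n B" by (simp add: ptstab_char[OF assms])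
      moreover have "?p x = y" by simp
      ultimately show "y \<in> {p x | p. p \<in> ptstab n B}" by (intro CollectI exI[of _ ?p]) simp
    qed
  qed
  hence *: "\<And>x. x \<in> {1..n} \<Longrightarrow> {p x | p. p \<in> ptstab n B} = atm n B x" by simp
  have "pt_orbits n B = (\<lambda>x. {p x | p. p \<in> ptstab n B}) ` {1..n}" unfolding pt_orbits_def by (simp only: setcompr_eq_image Collect_mem_eq)
  also have "\<dots> = atm n B ` {1..n}" using * by (rule image_cong[OF refl])
  finally show ?thesis .
qed

lemma ptstab_subgroup: "subgroup (ptstab n B) (sym_group n)"
proof (rule group.subgroupI[OF sym_group_is_group])
  show "ptstab n B \<subseteq> carrier (sym_group n)" unfolding ptstab_def by blast
  have "id \<in> ptstab n B" unfolding ptstab_def sym_group_carrier by (simp add: permutes_id)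
  thus "ptstab n B \<noteq> {}" by blast
next
  fix p assume p: "p \<in> ptstab n B"
  hence pp: "p permutes {1..n}" and fx: "\<forall>b\<in>B. p ` b = b" unfolding ptstab_def sym_group_carrier by auto
  have "inv' p permutes {1..n}" using permutes_inv[OF pp] .
  moreover have "inv' p ` b = b" if "b \<in> B" for b
  proof -
    have "inv' p ` (p ` b) = b" using image_inv_f_f[OF permutes_inj[OF pp]] .
    thus ?thesis using fx that by simp
  qed
  moreover have "inv\<^bsub>sym_group n\<^esub> p = inv' p" using pp by (simp add: sym_group_carrier)
  ultimately show "inv\<^bsub>sym_group n\<^esub> p \<in> ptstab n B"
    unfolding ptstab_def sym_group_carrier by simp
next
  fix p q assume p: "p \<in> ptstab n B" and q: "q \<in> ptstab n B"
  have "p \<circ> q \<in> ptstab n B"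
  proof -
    have "(p \<circ> q) ` b = b" if "b \<in> B" for b
    proof -
      have "(p \<circ> q) ` b = p ` (q ` b)" by (rule image_comp[symmetric])
      thus ?thesis using p q that unfolding ptstab_def by simp
    qed
    moreover have "p \<circ> q permutes {1..n}" using p q unfolding ptstab_def sym_group_carrier
      by (simp add: permutes_compose)
    ultimately show ?thesis unfolding ptstab_def sym_group_carrier by simp
  qed
  thus "p \<otimes>\<^bsub>sym_group n\<^esub> q \<in> ptstab n B" by (simp add: sym_group_mult)
qed

lemma perm_grp_group: "subgroup H (sym_group n) \<Longrightarrow> group (perm_grp n H)"
  unfolding perm_grp_def by (rule subgroup.subgroup_is_group[OF _ sym_group_is_group])

definition act :: "nat \<Rightarrow> (nat \<Rightarrow> nat) \<Rightarrow> nat set \<Rightarrow> nat set" where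
  "act n p = (\<lambda>X \<in> Pow {1..n}. p ` X)"

lemma perm_img_sub: "p permutes S \<Longrightarrow> X \<subseteq> S \<Longrightarrow> p ` X \<subseteq> S"
  using permutes_image[of p S] image_mono[of X S p] by simp

lemma act_Bij: assumes "p permutes {1..n}" shows "act n p \<in> Bij (Pow {1..n})"
proof -
  have "bij_betw (act n p) (Pow {1..n}) (Pow {1..n})"
  proof (rule bij_betw_byWitness[where f'="act n (inv' p)"])
    have ip: "inv' p permutes {1..n}" using permutes_inv[OF assms] .
    show "\<forall>X\<in>Pow {1..n}. act n (inv' p) (act n p X) = X"
    proof
      fix X assume X: "X \<in> Pow {1..n}"
      have "p ` X \<in> Pow {1..n}" using X assms permutes_image by (simp add: perm_img_sub)
      thus "act n (inv' p) (act n p X) = X" using X assms by (simp add: act_def image_inv_f_f permutes_inj)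
    qed
    show "\<forall>X\<in>Pow {1..n}. act n p (act n (inv' p) X) = X"
    proof
      fix X assume X: "X \<in> Pow {1..n}"
      have "inv' p ` X \<in> Pow {1..n}" using X ip permutes_image by (simp add: perm_img_sub)
      thus "act n p (act n (inv' p) X) = X" using X assms by (simp add: act_def image_f_inv_f permutes_surj)
    qed
    show "act n p ` Pow {1..n} \<subseteq> Pow {1..n}"
    proof
      fix Y assume "Y \<in> act n p ` Pow {1..n}"
      then obtain X where X: "X \<in> Pow {1..n}" "Y = p ` X" by (auto simp: act_def)
      thus "Y \<in> Pow {1..n}" using assms permutes_image by (simp add: perm_img_sub)
    qed
    show "act n (inv' p) ` Pow {1..n} \<subseteq> Pow {1..n}"
    proof
      fix Y assume "Y \<in> act n (inv' p) ` Pow {1..n}"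
      then obtain X where X: "X \<in> Pow {1..n}" "Y = inv' p ` X" by (auto simp: act_def)
      thus "Y \<in> Pow {1..n}" using ip permutes_image by (simp add: perm_img_sub)
    qed
  qed
  thus ?thesis by (simp add: Bij_def act_def)
qed

lemma act_group_action:
  assumes H: "subgroup H (sym_group n)"
  shows "group_action (perm_grp n H) (Pow {1..n}) (act n)"
  unfolding group_action_def group_hom_def group_hom_axioms_def
proof (intro conjI)
  show "group (perm_grp n H)" using perm_grp_group[OF H] .
  show "Group.group (BijGroup (Pow {1..n}))" by (rule group_BijGroup)
  have Hs: "\<And>p. p \<in> H \<Longrightarrow> p permutes {1..n}"
    using subgroup.subset[OF H] by (auto simp: sym_group_carrier)
  show "act n \<in> hom (perm_grp n H) (BijGroup (Pow {1..n}))"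
  proof (rule homI)
    fix p assume "p \<in> carrier (perm_grp n H)"
    thus "act n p \<in> carrier (BijGroup (Pow {1..n}))"
      using Hs act_Bij by (simp add: perm_grp_def BijGroup_def)
  next
    fix p q assume p: "p \<in> carrier (perm_grp n H)" and q: "q \<in> carrier (perm_grp n H)"
    have pp: "p permutes {1..n}" and qp: "q permutes {1..n}" using p q Hs by (auto simp: perm_grp_def)
    have "act n (p \<circ> q) = compose (Pow {1..n}) (act n p) (act n q)"
    proof
      fix X show "act n (p \<circ> q) X = compose (Pow {1..n}) (act n p) (act n q) X"
      proof (cases "X \<in> Pow {1..n}")
        case True
        have "q ` X \<in> Pow {1..n}" using True qp permutes_image by (simp add: perm_img_sub)
        thus ?thesis using True by (simp add: act_def compose_def image_comp)
      qed (simp add: act_def compose_def)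
    qed
    thus "act n (p \<otimes>\<^bsub>perm_grp n H\<^esub> q) = act n p \<otimes>\<^bsub>BijGroup (Pow {1..n})\<^esub> act n q"
      using act_Bij[OF pp] act_Bij[OF qp] by (simp add: perm_grp_def sym_group_mult BijGroup_def)
  qed
qed

lemma orbit_stab:
  assumes H: "subgroup H (sym_group n)" and a: "a \<subseteq> {1..n}"
  shows "card (set_orbit H a) * card (set_stab H a) = card H"
proof -
  interpret group_action "perm_grp n H" "Pow {1..n}" "act n" by (rule act_group_action[OF H])
  have "orbit (perm_grp n H) (act n) a = set_orbit H a"
    using a by (auto simp: orbit_def set_orbit_def perm_grp_def act_def)
  moreover have "stabilizer (perm_grp n H) (act n) a = set_stab H a"
    using a by (auto simp: stabilizer_def set_stab_def perm_grp_def act_def)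
  moreover have "order (perm_grp n H) = card H" by (simp add: order_def perm_grp_def)
  ultimately show ?thesis using orbit_stabilizer_theorem[of a] a by simp
qed

abbreviation Ats :: "nat \<Rightarrow> nat set set \<Rightarrow> nat set set" where
  "Ats n B \<equiv> atm n B ` {1..n}"

lemma Ats_fin: "finite (Ats n B)" by simp

lemma Ats_sub: "D \<in> Ats n B \<Longrightarrow> D \<subseteq> {1..n}"
  using atm_sub by blast

lemma Ats_finD: "D \<in> Ats n B \<Longrightarrow> finite D"
  using Ats_sub[of D n B] finite_subset[of D "{1..n}"] by simp

lemma Ats_disj: "D \<in> Ats n B \<Longrightarrow> E \<in> Ats n B \<Longrightarrow> D \<noteq> E \<Longrightarrow> D \<inter> E = {}"
proof -
  assume "D \<in> Ats n B" "E \<in> Ats n B" "D \<noteq> E"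
  then obtain x y where "x \<in> {1..n}" "y \<in> {1..n}" "D = atm n B x" "E = atm n B y" by blast
  thus ?thesis using atm_disj \<open>D \<noteq> E\<close> by blast
qed

lemma Ats_mem: "x \<in> {1..n} \<Longrightarrow> D \<in> Ats n B \<Longrightarrow> x \<in> D \<Longrightarrow> D = atm n B x"
proof -
  assume x: "x \<in> D" and "D \<in> Ats n B"
  then obtain z where z: "z \<in> {1..n}" "D = atm n B z" by blast
  thus ?thesis using atm_eq[OF z(1), of x B] x by simp
qed

lemma Ats_Un: "M \<subseteq> {1..n} \<Longrightarrow> M = (\<Union>D\<in>Ats n B. D \<inter> M)"
proof
  assume M: "M \<subseteq> {1..n}"
  show "M \<subseteq> (\<Union>D\<in>Ats n B. D \<inter> M)"
  proof
    fix x assume x: "x \<in> M"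
    hence xs: "x \<in> {1..n}" using M by blast
    hence "x \<in> atm n B x \<inter> M" using atm_self x by blast
    thus "x \<in> (\<Union>D\<in>Ats n B. D \<inter> M)" using xs by blast
  qed
qed blast

lemma card_sum_Ats:
  assumes "M \<subseteq> {1..n}"
  shows "card M = (\<Sum>D\<in>Ats n B. card (D \<inter> M))"
proof -
  have "card (\<Union>D\<in>Ats n B. D \<inter> M) = (\<Sum>D\<in>Ats n B. card (D \<inter> M))"
  proof (rule card_UN_disjoint)
    show "finite (Ats n B)" by simp
    show "\<forall>i\<in>Ats n B. finite (i \<inter> M)" using Ats_finD by blast
    show "\<forall>i\<in>Ats n B. \<forall>j\<in>Ats n B. i \<noteq> j \<longrightarrow> i \<inter> M \<inter> (j \<inter> M) = {}"
      using Ats_disj by blast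
  qed
  thus ?thesis using Ats_Un[OF assms, of B] by simp
qed

lemma bij_split:
  assumes D: "finite D" and X: "X \<subseteq> D" and Y: "Y \<subseteq> D" and c: "card X = card Y"
  shows "\<exists>h. bij_betw h D D \<and> (\<forall>y\<in>D. y \<in> X \<longleftrightarrow> h y \<in> Y)"
proof -
  obtain f where f: "bij_betw f X Y"
    using finite_same_card_bij[OF finite_subset[OF X D] finite_subset[OF Y D] c] by blast
  have c2: "card (D - X) = card (D - Y)"
    using c X Y D by (simp add: card_Diff_subset finite_subset)
  obtain g where g: "bij_betw g (D - X) (D - Y)"
    using finite_same_card_bij[OF _ _ c2] D by blast
  define h where "h = (\<lambda>x. if x \<in> X then f x else g x)"
  have "bij_betw h X Y" using f unfolding h_def by (rule bij_betw_cong[THEN iffD1, rotated]) simp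
  moreover have "bij_betw h (D - X) (D - Y)" using g unfolding h_def
    by (rule bij_betw_cong[THEN iffD1, rotated]) simp
  ultimately have "bij_betw h (X \<union> (D - X)) (Y \<union> (D - Y))"
    by (rule bij_betw_combine) blast
  moreover have "X \<union> (D - X) = D" "Y \<union> (D - Y) = D" using X Y by blast+
  ultimately have hb: "bij_betw h D D" by simp
  have "\<forall>y\<in>D. y \<in> X \<longleftrightarrow> h y \<in> Y"
  proof
    fix y assume y: "y \<in> D"
    show "y \<in> X \<longleftrightarrow> h y \<in> Y"
    proof (cases "y \<in> X")
      case True thus ?thesis using f bij_betwE unfolding h_def by fastforce
    next
      case False
      hence "g y \<in> D - Y" using g y bij_betwE by blast
      thus ?thesis using False unfolding h_def by simp
    qed
  qed
  with hb show ?thesis by blast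
qed

lemma build_perm:
  assumes h: "\<forall>D\<in>Ats n B. bij_betw (h D) D D"
  defines "\<sigma> \<equiv> (\<lambda>x. if x \<in> {1..n} then h (atm n B x) x else x)"
  shows "\<sigma> permutes {1..n}" and "\<forall>x\<in>{1..n}. \<sigma> x \<in> atm n B x"
    and "\<forall>x\<in>{1..n}. \<sigma> x = h (atm n B x) x"
proof -
  have inat: "\<sigma> x \<in> atm n B x" if x: "x \<in> {1..n}" for x
  proof -
    have "atm n B x \<in> Ats n B" using x by blast
    hence "bij_betw (h (atm n B x)) (atm n B x) (atm n B x)" using h by blast
    moreover have "x \<in> atm n B x" using atm_self x .
    ultimately have "h (atm n B x) x \<in> atm n B x" using bij_betwE by blast
    thus ?thesis using x unfolding \<sigma>_def by simp
  qed
  thus "\<forall>x\<in>{1..n}. \<sigma> x \<in> atm n B x" by blast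
  show "\<forall>x\<in>{1..n}. \<sigma> x = h (atm n B x) x" unfolding \<sigma>_def by simp
  have "bij_betw \<sigma> {1..n} {1..n}"
    unfolding bij_betw_def
  proof
    show "inj_on \<sigma> {1..n}"
    proof (rule inj_onI)
      fix x y assume x: "x \<in> {1..n}" and y: "y \<in> {1..n}" and e: "\<sigma> x = \<sigma> y"
      have "atm n B (\<sigma> x) = atm n B x" using atm_eq[OF x inat[OF x]] .
      moreover have "atm n B (\<sigma> y) = atm n B y" using atm_eq[OF y inat[OF y]] .
      ultimately have eq: "atm n B x = atm n B y" using e by simp
      have "atm n B x \<in> Ats n B" using x by blast
      hence "bij_betw (h (atm n B x)) (atm n B x) (atm n B x)" using h by blast
      hence "inj_on (h (atm n B x)) (atm n B x)" by (simp add: bij_betw_def)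
      moreover have "h (atm n B x) x = h (atm n B x) y" using e eq x y unfolding \<sigma>_def by simp
      moreover have "x \<in> atm n B x" "y \<in> atm n B x" using eq atm_self x y by auto
      ultimately show "x = y" by (meson inj_onD)
    qed
    show "\<sigma> ` {1..n} = {1..n}"
    proof
      show "\<sigma> ` {1..n} \<subseteq> {1..n}" using inat atm_sub by blast
      show "{1..n} \<subseteq> \<sigma> ` {1..n}"
      proof
        fix y assume y: "y \<in> {1..n}"
        let ?D = "atm n B y"
        have "?D \<in> Ats n B" using y by blast
        hence "bij_betw (h ?D) ?D ?D" using h by blast
        hence "h ?D ` ?D = ?D" by (simp add: bij_betw_def)
        moreover have "y \<in> ?D" using atm_self y .
        ultimately obtain x where x: "x \<in> ?D" "h ?D x = y" by (metis imageE)
        have xs: "x \<in> {1..n}" using x atm_sub by blast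
        have "atm n B x = ?D" using atm_eq[OF y x(1)] .
        hence "\<sigma> x = y" using x xs unfolding \<sigma>_def by simp
        thus "y \<in> \<sigma> ` {1..n}" using xs by blast
      qed
    qed
  qed
  moreover have "\<forall>x. x \<notin> {1..n} \<longrightarrow> \<sigma> x = x" unfolding \<sigma>_def by simp
  ultimately show "\<sigma> permutes {1..n}" using bij_imp_permutes by blast
qed

lemma orbit_char:
  assumes hB: "\<forall>b\<in>B. b \<subseteq> {1..n}" and a: "a \<subseteq> {1..n}"
  shows "set_orbit (ptstab n B) a = {b. b \<subseteq> {1..n} \<and> (\<forall>D\<in>Ats n B. card (D \<inter> b) = card (D \<inter> a))}"
proof
  show "set_orbit (ptstab n B) a \<subseteq> {b. b \<subseteq> {1..n} \<and> (\<forall>D\<in>Ats n B. card (D \<inter> b) = card (D \<inter> a))}"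
  proof
    fix b assume "b \<in> set_orbit (ptstab n B) a"
    then obtain p where p: "p \<in> ptstab n B" and b: "b = p ` a" unfolding set_orbit_def by blast
    have pp: "p permutes {1..n}" and t: "\<forall>x\<in>{1..n}. p x \<in> atm n B x"
      using p ptstab_char[OF hB] by blast+
    have inj: "inj p" using permutes_inj[OF pp] .
    have bs: "b \<subseteq> {1..n}" using b perm_img_sub[OF pp a] by simp
    have "card (D \<inter> b) = card (D \<inter> a)" if D: "D \<in> Ats n B" for D
    proof -
      have "D \<inter> p ` a = p ` (D \<inter> a)"
      proof
        show "D \<inter> p ` a \<subseteq> p ` (D \<inter> a)"
        proof
          fix y assume y: "y \<in> D \<inter> p ` a"
          then obtain x where x: "x \<in> a" "y = p x" by blast
          have xs: "x \<in> {1..n}" using x a by blast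
          have ys: "y \<in> {1..n}" using y D Ats_sub by blast
          have "D = atm n B y" using Ats_mem[OF ys D] y by blast
          also have "\<dots> = atm n B x" using atm_eq[OF xs] t xs x by simp
          finally have "x \<in> D" using atm_self[OF xs] by simp
          thus "y \<in> p ` (D \<inter> a)" using x by blast
        qed
        show "p ` (D \<inter> a) \<subseteq> D \<inter> p ` a"
        proof
          fix y assume "y \<in> p ` (D \<inter> a)"
          then obtain x where x: "x \<in> D" "x \<in> a" "y = p x" by blast
          have xs: "x \<in> {1..n}" using x a by blast
          have "D = atm n B x" using Ats_mem[OF xs D x(1)] .
          hence "p x \<in> D" using t xs by simp
          thus "y \<in> D \<inter> p ` a" using x by blast
        qed
      qed
      moreover have "card (p ` (D \<inter> a)) = card (D \<inter> a)"
        using card_image[OF inj_on_subset[OF inj subset_UNIV]] .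
      ultimately show ?thesis using b by simp
    qed
    thus "b \<in> {b. b \<subseteq> {1..n} \<and> (\<forall>D\<in>Ats n B. card (D \<inter> b) = card (D \<inter> a))}" using bs by blast
  qed
next
  show "{b. b \<subseteq> {1..n} \<and> (\<forall>D\<in>Ats n B. card (D \<inter> b) = card (D \<inter> a))} \<subseteq> set_orbit (ptstab n B) a"
  proof
    fix b assume "b \<in> {b. b \<subseteq> {1..n} \<and> (\<forall>D\<in>Ats n B. card (D \<inter> b) = card (D \<inter> a))}"
    hence bs: "b \<subseteq> {1..n}" and cb: "\<forall>D\<in>Ats n B. card (D \<inter> b) = card (D \<inter> a)" by blast+
    have "\<forall>D\<in>Ats n B. \<exists>h. bij_betw h D D \<and> (\<forall>y\<in>D. y \<in> D \<inter> a \<longleftrightarrow> h y \<in> D \<inter> b)"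
    proof
      fix D assume D: "D \<in> Ats n B"
      show "\<exists>h. bij_betw h D D \<and> (\<forall>y\<in>D. y \<in> D \<inter> a \<longleftrightarrow> h y \<in> D \<inter> b)"
      proof -
        have "card (D \<inter> a) = card (D \<inter> b)" using bspec[OF cb D] by simp
        thus ?thesis using bij_split[OF Ats_finD[OF D], of "D \<inter> a" "D \<inter> b"] by blast
      qed
    qed
    then obtain H where H: "\<forall>D\<in>Ats n B. bij_betw (H D) D D \<and> (\<forall>y\<in>D. y \<in> D \<inter> a \<longleftrightarrow> H D y \<in> D \<inter> b)"
      by metis
    define \<sigma> where "\<sigma> = (\<lambda>x. if x \<in> {1..n} then H (atm n B x) x else x)"
    have Hb: "\<forall>D\<in>Ats n B. bij_betw (H D) D D" using H by blast
    have bp1: "\<sigma> permutes {1..n}" using build_perm(1)[OF Hb] unfolding \<sigma>_def .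
    have bp2: "\<forall>x\<in>{1..n}. \<sigma> x \<in> atm n B x" using build_perm(2)[OF Hb] unfolding \<sigma>_def .
    have bp3: "\<forall>x\<in>{1..n}. \<sigma> x = H (atm n B x) x" using build_perm(3)[OF Hb] unfolding \<sigma>_def .
    note bp = bp1 bp2 bp3
    have sG: "\<sigma> \<in> ptstab n B" unfolding ptstab_char[OF hB] using bp(1,2) by blast
    have "\<sigma> ` a = b"
    proof
      show "\<sigma> ` a \<subseteq> b"
      proof
        fix y assume "y \<in> \<sigma> ` a"
        then obtain x where x: "x \<in> a" "y = \<sigma> x" by blast
        have xs: "x \<in> {1..n}" using x a by blast
        let ?D = "atm n B x"
        have D: "?D \<in> Ats n B" using xs by blast
        have "x \<in> ?D \<inter> a" using atm_self[OF xs] x by blast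
        hence "H ?D x \<in> ?D \<inter> b" using H D atm_self[OF xs] by blast
        thus "y \<in> b" using x bp(3) xs by simp
      qed
      show "b \<subseteq> \<sigma> ` a"
      proof
        fix y assume y: "y \<in> b"
        have ys: "y \<in> {1..n}" using y bs by blast
        let ?D = "atm n B y"
        have D: "?D \<in> Ats n B" using ys by blast
        have hD: "bij_betw (H ?D) ?D ?D" using H D by blast
        hence "H ?D ` ?D = ?D" by (simp add: bij_betw_def)
        then obtain x where x: "x \<in> ?D" "H ?D x = y" using atm_self[OF ys] by (metis imageE)
        have "H ?D x \<in> ?D \<inter> b" using x y atm_self[OF ys] by simp
        hence xa: "x \<in> a" using H D x(1) by blast
        have xs: "x \<in> {1..n}" using x atm_sub by blast
        have "atm n B x = ?D" using atm_eq[OF ys x(1)] .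
        hence "\<sigma> x = y" using bp(3) xs x by simp
        thus "y \<in> \<sigma> ` a" using xa by blast
      qed
    qed
    thus "b \<in> set_orbit (ptstab n B) a" unfolding set_orbit_def using sG by blast
  qed
qed

lemma inter_Union_PiE:
  assumes f: "f \<in> (\<Pi>\<^sub>E D\<in>Ats n B. {s. s \<subseteq> D \<and> card s = k D})" and D: "D \<in> Ats n B"
  shows "D \<inter> \<Union>(f ` Ats n B) = f D"
proof
  show "f D \<subseteq> D \<inter> \<Union>(f ` Ats n B)" using f D by blast
  show "D \<inter> \<Union>(f ` Ats n B) \<subseteq> f D"
  proof
    fix x assume x: "x \<in> D \<inter> \<Union>(f ` Ats n B)"
    then obtain E where E: "E \<in> Ats n B" "x \<in> f E" by blast
    have "f E \<subseteq> E" using f E(1) by blast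
    hence "x \<in> E \<inter> D" using x E by blast
    hence "E = D" using Ats_disj[OF E(1) D] by blast
    thus "x \<in> f D" using E by simp
  qed
qed

lemma count_sets:
  "card {b. b \<subseteq> {1..n} \<and> (\<forall>D\<in>Ats n B. card (D \<inter> b) = k D)} = (\<Prod>D\<in>Ats n B. card D choose k D)"
proof -
  let ?P = "\<Pi>\<^sub>E D\<in>Ats n B. {s. s \<subseteq> D \<and> card s = k D}"
  let ?T = "{b. b \<subseteq> {1..n} \<and> (\<forall>D\<in>Ats n B. card (D \<inter> b) = k D)}"
  have "bij_betw (\<lambda>f. \<Union>(f ` Ats n B)) ?P ?T"
  proof (rule bij_betw_byWitness[where f'="\<lambda>b. restrict (\<lambda>D. D \<inter> b) (Ats n B)"])
    show "\<forall>f\<in>?P. restrict (\<lambda>D. D \<inter> \<Union>(f ` Ats n B)) (Ats n B) = f"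
    proof
      fix f assume f: "f \<in> ?P"
      show "restrict (\<lambda>D. D \<inter> \<Union>(f ` Ats n B)) (Ats n B) = f"
      proof (rule PiE_ext[OF _ f])
        show "restrict (\<lambda>D. D \<inter> \<Union>(f ` Ats n B)) (Ats n B) \<in> ?P"
          using inter_Union_PiE[OF f] f by auto
        show "\<And>i. i \<in> Ats n B \<Longrightarrow> restrict (\<lambda>D. D \<inter> \<Union>(f ` Ats n B)) (Ats n B) i = f i"
          using inter_Union_PiE[OF f] by simp
      qed
    qed
    show "\<forall>b\<in>?T. \<Union>((restrict (\<lambda>D. D \<inter> b) (Ats n B)) ` Ats n B) = b"
    proof
      fix b assume "b \<in> ?T"
      hence bs: "b \<subseteq> {1..n}" by blast
      have "\<Union>((restrict (\<lambda>D. D \<inter> b) (Ats n B)) ` Ats n B) = (\<Union>D\<in>Ats n B. D \<inter> b)" by simp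
      also have "\<dots> = b" using Ats_Un[OF bs] by simp
      finally show "\<Union>((restrict (\<lambda>D. D \<inter> b) (Ats n B)) ` Ats n B) = b" .
    qed
    show "(\<lambda>f. \<Union>(f ` Ats n B)) ` ?P \<subseteq> ?T"
    proof
      fix b assume "b \<in> (\<lambda>f. \<Union>(f ` Ats n B)) ` ?P"
      then obtain f where f: "f \<in> ?P" and b: "b = \<Union>(f ` Ats n B)" by blast
      have "b \<subseteq> {1..n}"
      proof
        fix x assume "x \<in> b"
        then obtain E where E: "E \<in> Ats n B" "x \<in> f E" using b by blast
        have "f E \<subseteq> E" using f E(1) by blast
        thus "x \<in> {1..n}" using E Ats_sub by blast
      qed
      moreover have "\<forall>D\<in>Ats n B. card (D \<inter> b) = k D"
        using inter_Union_PiE[OF f] f b by auto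
      ultimately show "b \<in> ?T" by blast
    qed
    show "(\<lambda>b. restrict (\<lambda>D. D \<inter> b) (Ats n B)) ` ?T \<subseteq> ?P" by auto
  qed
  hence "card ?P = card ?T" by (rule bij_betw_same_card)
  hence "card ?T = card ?P" by simp
  also have "\<dots> = (\<Prod>D\<in>Ats n B. card {s. s \<subseteq> D \<and> card s = k D})" by (simp add: card_PiE)
  also have "\<dots> = (\<Prod>D\<in>Ats n B. card D choose k D)"
    using n_subsets[OF Ats_finD] by simp
  finally show ?thesis .
qed

lemma stab_ins: "set_stab (ptstab n B) a = ptstab n (insert a B)"
  unfolding set_stab_def ptstab_def by blast

lemma atm_insert: "atm n (insert a B) x = {y \<in> atm n B x. y \<in> a \<longleftrightarrow> x \<in> a}"
  unfolding atm_def by blast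

lemma conj_iso:
  assumes h1: "\<forall>b\<in>B1. b \<subseteq> {1..n}" and h2: "\<forall>b\<in>B2. b \<subseteq> {1..n}"
    and sp: "\<sigma> permutes {1..n}"
    and c: "\<forall>x\<in>{1..n}. \<forall>y\<in>{1..n}. y \<in> atm n B1 x \<longleftrightarrow> \<sigma> y \<in> atm n B2 (\<sigma> x)"
  shows "perm_grp n (ptstab n B1) \<cong> perm_grp n (ptstab n B2)"
proof -
  define \<tau> where "\<tau> = inv' \<sigma>"
  have tp: "\<tau> permutes {1..n}" unfolding \<tau>_def using permutes_inv[OF sp] .
  have st: "\<And>x. \<sigma> (\<tau> x) = x" unfolding \<tau>_def using permutes_inverses(1)[OF sp] .
  have ts: "\<And>x. \<tau> (\<sigma> x) = x" unfolding \<tau>_def using permutes_inverses(2)[OF sp] .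
  have sS: "\<And>x. x \<in> {1..n} \<Longrightarrow> \<sigma> x \<in> {1..n}" using permutes_in_image[OF sp] by simp
  have tS: "\<And>x. x \<in> {1..n} \<Longrightarrow> \<tau> x \<in> {1..n}" using permutes_in_image[OF tp] by simp
  define cf where "cf = (\<lambda>p. \<sigma> \<circ> p \<circ> \<tau>)"
  have mem1: "cf p \<in> ptstab n B2" if p: "p \<in> ptstab n B1" for p
  proof -
    have pp: "p permutes {1..n}" and t: "\<forall>x\<in>{1..n}. p x \<in> atm n B1 x"
      using p unfolding ptstab_char[OF h1] by blast+
    have pS: "\<And>x. x \<in> {1..n} \<Longrightarrow> p x \<in> {1..n}" using permutes_in_image[OF pp] by simp
    have "cf p permutes {1..n}" unfolding cf_def
      using permutes_compose[OF permutes_compose[OF tp pp] sp] by (simp add: comp_assoc)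
    moreover have "\<forall>x\<in>{1..n}. cf p x \<in> atm n B2 x"
    proof
      fix x assume x: "x \<in> {1..n}"
      have z: "\<tau> x \<in> {1..n}" using tS[OF x] .
      have "p (\<tau> x) \<in> atm n B1 (\<tau> x)" using t z by blast
      hence "\<sigma> (p (\<tau> x)) \<in> atm n B2 (\<sigma> (\<tau> x))" using c z pS[OF z] by blast
      thus "cf p x \<in> atm n B2 x" unfolding cf_def using st by simp
    qed
    ultimately show ?thesis unfolding ptstab_char[OF h2] by blast
  qed
  have mem2: "\<tau> \<circ> q \<circ> \<sigma> \<in> ptstab n B1" if q: "q \<in> ptstab n B2" for q
  proof -
    have qp: "q permutes {1..n}" and t: "\<forall>x\<in>{1..n}. q x \<in> atm n B2 x"
      using q unfolding ptstab_char[OF h2] by blast+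
    have qS: "\<And>x. x \<in> {1..n} \<Longrightarrow> q x \<in> {1..n}" using permutes_in_image[OF qp] by simp
    have "\<tau> \<circ> q \<circ> \<sigma> permutes {1..n}"
      using permutes_compose[OF permutes_compose[OF sp qp] tp] by (simp add: comp_assoc)
    moreover have "\<forall>z\<in>{1..n}. (\<tau> \<circ> q \<circ> \<sigma>) z \<in> atm n B1 z"
    proof
      fix z assume z: "z \<in> {1..n}"
      define w where "w = \<tau> (q (\<sigma> z))"
      have ws: "w \<in> {1..n}" unfolding w_def using tS[OF qS[OF sS[OF z]]] .
      have "\<sigma> w \<in> atm n B2 (\<sigma> z)" unfolding w_def using st t sS[OF z] by simp
      hence "w \<in> atm n B1 z" using c z ws by blast
      thus "(\<tau> \<circ> q \<circ> \<sigma>) z \<in> atm n B1 z" unfolding w_def by simp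
    qed
    ultimately show ?thesis unfolding ptstab_char[OF h1] by blast
  qed
  have "cf \<in> iso (perm_grp n (ptstab n B1)) (perm_grp n (ptstab n B2))"
    unfolding iso_def
  proof (intro CollectI conjI)
    show "cf \<in> hom (perm_grp n (ptstab n B1)) (perm_grp n (ptstab n B2))"
    proof (rule homI)
      fix p assume "p \<in> carrier (perm_grp n (ptstab n B1))"
      thus "cf p \<in> carrier (perm_grp n (ptstab n B2))" using mem1 by (simp add: perm_grp_def)
    next
      fix p q
      have "cf (p \<circ> q) = cf p \<circ> cf q" unfolding cf_def using ts by (simp add: fun_eq_iff)
      thus "cf (p \<otimes>\<^bsub>perm_grp n (ptstab n B1)\<^esub> q) =
            cf p \<otimes>\<^bsub>perm_grp n (ptstab n B2)\<^esub> cf q"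
        by (simp add: perm_grp_def sym_group_mult)
    qed
    show "bij_betw cf (carrier (perm_grp n (ptstab n B1))) (carrier (perm_grp n (ptstab n B2)))"
    proof (rule bij_betw_byWitness[where f'="\<lambda>q. \<tau> \<circ> q \<circ> \<sigma>"])
      show "\<forall>p\<in>carrier (perm_grp n (ptstab n B1)). \<tau> \<circ> cf p \<circ> \<sigma> = p"
        unfolding cf_def using ts by (simp add: fun_eq_iff)
      show "\<forall>q\<in>carrier (perm_grp n (ptstab n B2)). cf (\<tau> \<circ> q \<circ> \<sigma>) = q"
        unfolding cf_def using st by (simp add: fun_eq_iff)
      show "cf ` carrier (perm_grp n (ptstab n B1)) \<subseteq> carrier (perm_grp n (ptstab n B2))"
        using mem1 by (auto simp: perm_grp_def)
      show "(\<lambda>q. \<tau> \<circ> q \<circ> \<sigma>) ` carrier (perm_grp n (ptstab n B2)) \<subseteq> carrier (perm_grp n (ptstab n B1))"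
        using mem2 by (auto simp: perm_grp_def)
    qed
  qed
  thus ?thesis by (rule is_isoI)
qed

definition rt :: "nat \<Rightarrow> nat \<Rightarrow> real" where
  "rt d k = real (d - k) / (real k + 1)"

definition Fv :: "nat \<Rightarrow> nat set set \<Rightarrow> nat set \<Rightarrow> nat" where
  "Fv n B X = (\<Prod>D\<in>Ats n B. card D choose card (D \<inter> X))"

lemma rt_mono: "k \<le> k' \<Longrightarrow> rt d k' \<le> rt d k"
  unfolding rt_def by (rule frac_le) auto

lemma rt_pos: "k < d \<Longrightarrow> 0 < rt d k"
  unfolding rt_def by simp

lemma rt_nonneg: "0 \<le> rt d k"
  unfolding rt_def by simp

lemma rt_ge1: "1 \<le> rt d k \<longleftrightarrow> 2 * k + 1 \<le> d"
proof -
  have "1 \<le> rt d k \<longleftrightarrow> real k + 1 \<le> real (d - k)"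
    unfolding rt_def by (simp add: le_divide_eq_1_pos add_pos_nonneg)
  also have "\<dots> \<longleftrightarrow> k + 1 \<le> d - k" by linarith
  also have "\<dots> \<longleftrightarrow> 2 * k + 1 \<le> d" by linarith
  finally show ?thesis .
qed

lemma rt_eq1: "rt d k = 1 \<longleftrightarrow> d = 2 * k + 1"
proof -
  have "rt d k = 1 \<longleftrightarrow> real (d - k) = real k + 1"
  proof -
    have pos: "real k + 1 \<noteq> 0" by linarith
    show ?thesis unfolding rt_def using pos by (simp add: divide_eq_eq)
  qed
  also have "\<dots> \<longleftrightarrow> d - k = k + 1" by linarith
  also have "\<dots> \<longleftrightarrow> d = 2 * k + 1" by linarith
  finally show ?thesis .
qed

lemma binom_rt: "real (d choose Suc k) = real (d choose k) * rt d k"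
proof -
  have "Suc k * (d choose Suc k) = (d - k) * (d choose k)"
    using binomial_absorption[of k d] binomial_absorb_comp[of d k] by simp
  hence "real (Suc k) * real (d choose Suc k) = real (d - k) * real (d choose k)"
    by (metis of_nat_mult)
  thus ?thesis unfolding rt_def by (simp add: field_simps)
qed

lemma score_rt: "finite D \<Longrightarrow> score D M = rt (card D) (card (D \<inter> M))"
  unfolding score_def rt_def by (simp add: card_Diff_subset_Int)

lemma Fv_pos: "0 < Fv n B X"
  unfolding Fv_def
proof (rule prod_pos)
  fix D assume "D \<in> Ats n B"
  hence "finite D" by (rule Ats_finD)
  hence "card (D \<inter> X) \<le> card D" by (simp add: card_mono)
  thus "0 < card D choose card (D \<inter> X)" by simp
qed

lemma swap_facts:
  assumes X: "X \<subseteq> {1..n}" and D: "D \<in> Ats n B" and E: "E \<in> Ats n B" and DE: "D \<noteq> E"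
    and u: "u \<in> D \<inter> X" and w: "w \<in> E" "w \<notin> X"
  defines "X' \<equiv> insert w (X - {u})"
  shows "card (D \<inter> X') = card (D \<inter> X) - 1" and "card (E \<inter> X') = Suc (card (E \<inter> X))"
    and "\<And>G. G \<in> Ats n B \<Longrightarrow> G \<noteq> D \<Longrightarrow> G \<noteq> E \<Longrightarrow> G \<inter> X' = G \<inter> X"
    and "X' \<subseteq> {1..n}" and "card X' = card X"
proof -
  have dis: "D \<inter> E = {}" using Ats_disj[OF D E DE] .
  have fX: "finite X" using X finite_subset by blast
  have "D \<inter> X' = (D \<inter> X) - {u}" unfolding X'_def using dis w by blast
  thus "card (D \<inter> X') = card (D \<inter> X) - 1" using u fX by (simp add: card_Diff_singleton)
  have "E \<inter> X' = insert w (E \<inter> X)" unfolding X'_def using dis w u by blast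
  thus "card (E \<inter> X') = Suc (card (E \<inter> X))" using w fX by simp
  show "\<And>G. G \<in> Ats n B \<Longrightarrow> G \<noteq> D \<Longrightarrow> G \<noteq> E \<Longrightarrow> G \<inter> X' = G \<inter> X"
  proof -
    fix G assume G: "G \<in> Ats n B" "G \<noteq> D" "G \<noteq> E"
    have "G \<inter> D = {}" "G \<inter> E = {}" using Ats_disj G D E by blast+
    thus "G \<inter> X' = G \<inter> X" unfolding X'_def using u w by blast
  qed
  show "X' \<subseteq> {1..n}" unfolding X'_def using X w Ats_sub[OF E] by blast
  show "card X' = card X" unfolding X'_def using fX u w
    by (simp add: card_Diff_singleton) (metis One_nat_def Suc_pred card_gt_0_iff empty_iff)
qed

lemma swap_F:
  assumes X: "X \<subseteq> {1..n}" and D: "D \<in> Ats n B" and E: "E \<in> Ats n B" and DE: "D \<noteq> E"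
    and u: "u \<in> D \<inter> X" and w: "w \<in> E" "w \<notin> X"
  defines "X' \<equiv> insert w (X - {u})"
  shows "real (Fv n B X') * rt (card D) (card (D \<inter> X) - 1)
       = real (Fv n B X) * rt (card E) (card (E \<inter> X))"
proof -
  note sf = swap_facts[OF X D E DE u w, folded X'_def]
  define f where "f = (\<lambda>(Y::nat set) (G::nat set). real (card G choose card (G \<inter> Y)))"
  have Fr: "real (Fv n B Y) = (\<Prod>G\<in>Ats n B. f Y G)" for Y
    unfolding Fv_def f_def by simp
  have split: "(\<Prod>G\<in>Ats n B. f Y G) = f Y D * (f Y E * (\<Prod>G\<in>Ats n B - {D} - {E}. f Y G))" for Y
  proof -
    have "(\<Prod>G\<in>Ats n B. f Y G) = f Y D * (\<Prod>G\<in>Ats n B - {D}. f Y G)"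
      using prod.remove[OF Ats_fin D] .
    moreover have "(\<Prod>G\<in>Ats n B - {D}. f Y G) = f Y E * (\<Prod>G\<in>Ats n B - {D} - {E}. f Y G)"
      using prod.remove[of "Ats n B - {D}" E] E DE by simp
    ultimately show ?thesis by simp
  qed
  have rest: "(\<Prod>G\<in>Ats n B - {D} - {E}. f X' G) = (\<Prod>G\<in>Ats n B - {D} - {E}. f X G)"
    by (rule prod.cong) (auto simp: f_def sf(3))
  have kD: "card (D \<inter> X) \<ge> 1"
  proof -
    have "finite (D \<inter> X)" using Ats_finD[OF D] by simp
    thus ?thesis using u card_0_eq by fastforce
  qed
  have fD: "f X' D * rt (card D) (card (D \<inter> X) - 1) = f X D"
  proof -
    have "f X D = real (card D choose Suc (card (D \<inter> X) - 1))" unfolding f_def using kD by simp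
    also have "\<dots> = f X' D * rt (card D) (card (D \<inter> X) - 1)"
      unfolding binom_rt f_def sf(1) ..
    finally show ?thesis by simp
  qed
  have fE: "f X' E = f X E * rt (card E) (card (E \<inter> X))"
    unfolding f_def sf(2) binom_rt ..
  show ?thesis unfolding Fr split rest
    using fD fE by (simp add: algebra_simps)
qed

definition LO :: "nat \<Rightarrow> nat set set \<Rightarrow> nat set \<Rightarrow> bool" where
  "LO n B X \<longleftrightarrow> (\<forall>D\<in>Ats n B. \<forall>E\<in>Ats n B. D \<inter> X \<noteq> {} \<longrightarrow>
      rt (card E) (card (E \<inter> X)) \<le> rt (card D) (card (D \<inter> X) - 1))"

lemma Fv_cong: "\<forall>D\<in>Ats n B. card (D \<inter> Y) = card (D \<inter> X) \<Longrightarrow> Fv n B Y = Fv n B X"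
  unfolding Fv_def by (rule prod.cong) auto

lemma sum_le_eq:
  fixes f g :: "nat set \<Rightarrow> nat"
  assumes "finite A" "\<forall>D\<in>A. f D \<le> g D" "sum f A = sum g A"
  shows "\<forall>D\<in>A. f D = g D"
  using sum_mono_inv[of f A g] assms by blast

lemma exists_gt:
  assumes X: "X \<subseteq> {1..n}" and Y: "Y \<subseteq> {1..n}" and c: "card X = card Y"
    and ne: "\<not> (\<forall>D\<in>Ats n B. card (D \<inter> Y) = card (D \<inter> X))"
  shows "\<exists>D\<in>Ats n B. card (D \<inter> X) < card (D \<inter> Y)"
proof (rule ccontr)
  assume "\<not> ?thesis"
  hence le: "\<forall>D\<in>Ats n B. card (D \<inter> Y) \<le> card (D \<inter> X)" by auto
  have "(\<Sum>D\<in>Ats n B. card (D \<inter> Y)) = (\<Sum>D\<in>Ats n B. card (D \<inter> X))"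
    using card_sum_Ats[OF X, of B] card_sum_Ats[OF Y, of B] c by simp
  hence "\<forall>D\<in>Ats n B. card (D \<inter> Y) = card (D \<inter> X)"
    using sum_le_eq[OF Ats_fin le] by blast
  thus False using ne by blast
qed

lemma LO_max:
  assumes X: "X \<subseteq> {1..n}" and lo: "LO n B X"
  shows "Y \<subseteq> {1..n} \<Longrightarrow> card Y = card X \<Longrightarrow> Fv n B Y \<le> Fv n B X"
proof (induction "card (Y - X)" arbitrary: Y rule: less_induct)
  case less
  note Y = less.prems(1) and cY = less.prems(2)
  show ?case
  proof (cases "\<forall>D\<in>Ats n B. card (D \<inter> Y) = card (D \<inter> X)")
    case True thus ?thesis using Fv_cong by (metis order_refl)
  next
    case False
    obtain Dj where Dj: "Dj \<in> Ats n B" "card (Dj \<inter> X) < card (Dj \<inter> Y)"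
      using exists_gt[OF X Y cY[symmetric] False] by blast
    have False': "\<not> (\<forall>D\<in>Ats n B. card (D \<inter> X) = card (D \<inter> Y))" using False by (metis (no_types, lifting))
    obtain Dk where Dk: "Dk \<in> Ats n B" "card (Dk \<inter> Y) < card (Dk \<inter> X)"
      using exists_gt[OF Y X cY False'] by blast
    have jk: "Dj \<noteq> Dk" using Dj Dk by auto
    have fDj: "finite Dj" "finite Dk" using Ats_finD Dj Dk by blast+
    obtain u where u: "u \<in> Dj \<inter> Y" "u \<notin> X"
    proof -
      have "\<not> (Dj \<inter> Y \<subseteq> Dj \<inter> X)"
      proof
        assume "Dj \<inter> Y \<subseteq> Dj \<inter> X"
        hence "card (Dj \<inter> Y) \<le> card (Dj \<inter> X)" using fDj by (simp add: card_mono)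
        thus False using Dj by simp
      qed
      thus ?thesis using that by blast
    qed
    obtain w where w: "w \<in> Dk \<inter> X" "w \<notin> Y"
    proof -
      have "\<not> (Dk \<inter> X \<subseteq> Dk \<inter> Y)"
      proof
        assume "Dk \<inter> X \<subseteq> Dk \<inter> Y"
        hence "card (Dk \<inter> X) \<le> card (Dk \<inter> Y)" using fDj by (simp add: card_mono)
        thus False using Dk by simp
      qed
      thus ?thesis using that by blast
    qed
    define Y' where "Y' = insert w (Y - {u})"
    have wk: "w \<in> Dk" using w by blast
    note sf = swap_facts[OF Y Dj(1) Dk(1) jk u(1) wk w(2), folded Y'_def]
    have fY: "finite Y" using Y finite_subset by blast
    have "Y' - X = (Y - X) - {u}" unfolding Y'_def using w by blast
    moreover have "u \<in> Y - X" using u by blast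
    moreover have "finite (Y - X)" using fY by simp
    ultimately have lt: "card (Y' - X) < card (Y - X)" using card_Diff1_less by metis
    have IH: "Fv n B Y' \<le> Fv n B X" using less.hyps[OF lt sf(4)] sf(5) cY by simp
    have sw: "real (Fv n B Y') * rt (card Dj) (card (Dj \<inter> Y) - 1)
       = real (Fv n B Y) * rt (card Dk) (card (Dk \<inter> Y))"
      unfolding Y'_def using swap_F[OF Y Dj(1) Dk(1) jk u(1) wk w(2)] .
    have r1: "rt (card Dk) (card (Dk \<inter> X) - 1) \<le> rt (card Dk) (card (Dk \<inter> Y))"
      by (rule rt_mono) (use Dk in linarith)
    have r2: "rt (card Dj) (card (Dj \<inter> X)) \<le> rt (card Dk) (card (Dk \<inter> X) - 1)"
      using lo Dk(1) Dj(1) w unfolding LO_def by blast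
    have r3: "rt (card Dj) (card (Dj \<inter> Y) - 1) \<le> rt (card Dj) (card (Dj \<inter> X))"
      by (rule rt_mono) (use Dj in linarith)
    have cle: "card (Dj \<inter> Y) \<le> card Dj" using fDj by (simp add: card_mono)
    have pos: "0 < rt (card Dj) (card (Dj \<inter> Y) - 1)"
      by (rule rt_pos) (use Dj cle in linarith)
    have "real (Fv n B Y) * rt (card Dj) (card (Dj \<inter> Y) - 1)
        \<le> real (Fv n B Y) * rt (card Dk) (card (Dk \<inter> Y))"
      using r1 r2 r3 by (intro mult_left_mono) auto
    hence "real (Fv n B Y) * rt (card Dj) (card (Dj \<inter> Y) - 1)
        \<le> real (Fv n B Y') * rt (card Dj) (card (Dj \<inter> Y) - 1)" using sw by simp
    hence "real (Fv n B Y) \<le> real (Fv n B Y')" using pos by simp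
    thus ?thesis using IH by linarith
  qed
qed

lemma max_LO_pair:
  assumes X: "X \<subseteq> {1..n}" and mx: "\<forall>Y. Y \<subseteq> {1..n} \<longrightarrow> card Y = card X \<longrightarrow> Fv n B Y \<le> Fv n B X"
    and D: "D \<in> Ats n B" and E: "E \<in> Ats n B" and DE: "D \<noteq> E"
    and u: "u \<in> D \<inter> X" and w: "w \<in> E" "w \<notin> X"
  shows "rt (card E) (card (E \<inter> X)) \<le> rt (card D) (card (D \<inter> X) - 1)"
proof -
  note sf = swap_facts[OF X D E DE u w]
  have le: "Fv n B (insert w (X - {u})) \<le> Fv n B X" using mx sf(4,5) by blast
  have sw: "real (Fv n B (insert w (X - {u}))) * rt (card D) (card (D \<inter> X) - 1)
       = real (Fv n B X) * rt (card E) (card (E \<inter> X))" using swap_F[OF X D E DE u w] .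
  have "real (Fv n B X) * rt (card E) (card (E \<inter> X)) \<le> real (Fv n B X) * rt (card D) (card (D \<inter> X) - 1)"
    unfolding sw[symmetric] using le rt_nonneg by (intro mult_right_mono) auto
  thus ?thesis using Fv_pos[of n B X] by simp
qed

lemma max_score_eq:
  assumes hB: "\<forall>b\<in>B. b \<subseteq> {1..n}"
  shows "max_score n B M = Max ((\<lambda>D. score D M) ` Ats n B)"
  unfolding max_score_def pt_orbits_eq[OF hB] ..

lemma score_le_max:
  assumes hB: "\<forall>b\<in>B. b \<subseteq> {1..n}" and E: "E \<in> Ats n B"
  shows "score E M \<le> max_score n B M"
  unfolding max_score_eq[OF hB] using E by (intro Max_ge) auto

lemma max_attained:
  assumes hB: "\<forall>b\<in>B. b \<subseteq> {1..n}" and n: "1 \<le> n"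
  shows "\<exists>E\<in>Ats n B. score E M = max_score n B M"
proof -
  have "Ats n B \<noteq> {}" using n by simp
  hence "Max ((\<lambda>D. score D M) ` Ats n B) \<in> (\<lambda>D. score D M) ` Ats n B"
    by (intro Max_in) auto
  thus ?thesis unfolding max_score_eq[OF hB] by (metis imageE)
qed

lemma greedy_step_D:
  assumes hB: "\<forall>b\<in>B. b \<subseteq> {1..n}" and g: "greedy_step n B M m"
  shows "m \<in> {1..n}" "m \<notin> M" "\<exists>D\<in>Ats n B. m \<in> D \<and> score D M = max_score n B M"
  using g unfolding greedy_step_def greedy_cands_def pt_orbits_eq[OF hB] by blast+

lemma card_ins_atom:
  assumes G: "G \<in> Ats n B" and E: "E \<in> Ats n B" and m: "m \<in> E" "m \<notin> M" and fM: "finite M"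
  shows "card (G \<inter> insert m M) = (if G = E then Suc (card (G \<inter> M)) else card (G \<inter> M))"
proof (cases "G = E")
  case True
  hence "G \<inter> insert m M = insert m (G \<inter> M)" using m by blast
  thus ?thesis using True m fM by simp
next
  case False
  hence "G \<inter> E = {}" using Ats_disj G E by blast
  hence "G \<inter> insert m M = G \<inter> M" using m by blast
  thus ?thesis using False by simp
qed

lemma LO_step:
  assumes hB: "\<forall>b\<in>B. b \<subseteq> {1..n}" and M: "M \<subseteq> {1..n}" and lo: "LO n B M"
    and D0: "D0 \<in> Ats n B" and m: "m \<in> D0" "m \<notin> M" and sc: "score D0 M = max_score n B M"
  shows "LO n B (insert m M)"
  unfolding LO_def
proof (intro ballI impI)
  fix D E assume D: "D \<in> Ats n B" and E: "E \<in> Ats n B" and ne: "D \<inter> insert m M \<noteq> {}"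
  have fM: "finite M" using M finite_subset by blast
  have fE: "finite E" using Ats_finD[OF E] .
  have a: "rt (card E) (card (E \<inter> insert m M)) \<le> rt (card E) (card (E \<inter> M))"
  proof (rule rt_mono)
    have "E \<inter> M \<subseteq> E \<inter> insert m M" by blast
    thus "card (E \<inter> M) \<le> card (E \<inter> insert m M)" using fE by (simp add: card_mono)
  qed
  have b: "rt (card E) (card (E \<inter> M)) \<le> rt (card D0) (card (D0 \<inter> M))"
    using score_le_max[OF hB E, of M] sc score_rt[OF fE] score_rt[OF Ats_finD[OF D0]] by simp
  show "rt (card E) (card (E \<inter> insert m M)) \<le> rt (card D) (card (D \<inter> insert m M) - 1)"
  proof (cases "D = D0")
    case True
    have "card (D \<inter> insert m M) = Suc (card (D \<inter> M))"
      using card_ins_atom[OF D D0 m fM] True by simp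
    thus ?thesis using a b True by simp
  next
    case False
    have eq: "card (D \<inter> insert m M) = card (D \<inter> M)"
      using card_ins_atom[OF D D0 m fM] False by simp
    have "D \<inter> insert m M = D \<inter> M" using Ats_disj[OF D D0 False] m by blast
    hence "D \<inter> M \<noteq> {}" using ne by simp
    hence "rt (card E) (card (E \<inter> M)) \<le> rt (card D) (card (D \<inter> M) - 1)"
      using lo D E unfolding LO_def by blast
    thus ?thesis using a eq by simp
  qed
qed

lemma greedy_LO:
  assumes hB: "\<forall>b\<in>B. b \<subseteq> {1..n}" and len: "length ms = r"
    and st: "\<forall>j<r. greedy_step n B (set (take j ms)) (ms ! j)"
  shows "j \<le> r \<Longrightarrow> set (take j ms) \<subseteq> {1..n} \<and> card (set (take j ms)) = j \<and> LO n B (set (take j ms))"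
proof (induction j)
  case 0
  thus ?case by (simp add: LO_def)
next
  case (Suc j)
  hence j: "j < r" by simp
  hence IH: "set (take j ms) \<subseteq> {1..n}" "card (set (take j ms)) = j" "LO n B (set (take j ms))"
    using Suc.IH by auto
  let ?M = "set (take j ms)" and ?m = "ms ! j"
  have g: "greedy_step n B ?M ?m" using st j by blast
  note gd = greedy_step_D[OF hB g]
  obtain D0 where D0: "D0 \<in> Ats n B" "?m \<in> D0" "score D0 ?M = max_score n B ?M" using gd(3) by blast
  have tk: "set (take (Suc j) ms) = insert ?m ?M"
    using j len by (simp add: take_Suc_conv_app_nth)
  have fM: "finite ?M" by simp
  show ?case unfolding tk
    using IH gd(1,2) LO_step[OF hB IH(1) IH(3) D0(1,2) gd(2) D0(3)] fM by simp
qed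

definition Rrel :: "nat \<Rightarrow> nat set set \<Rightarrow> nat set \<Rightarrow> nat set \<Rightarrow> bool" where
  "Rrel n B a Y \<longleftrightarrow> (\<forall>D\<in>Ats n B. card (D \<inter> Y) = card (D \<inter> a) \<or> card (D \<inter> Y) = card D - card (D \<inter> a))"

lemma counts_step:
  assumes M: "M \<subseteq> {1..n}" and E: "E \<in> Ats n B" and m: "m \<in> E" "m \<notin> M"
    and le: "\<forall>G\<in>Ats n B. card (G \<inter> M) \<le> card (G \<inter> Y)" and lt: "card (E \<inter> M) < card (E \<inter> Y)"
  shows "\<forall>G\<in>Ats n B. card (G \<inter> insert m M) \<le> card (G \<inter> Y)"
proof
  fix G assume G: "G \<in> Ats n B"
  have fM: "finite M" using M finite_subset by blast
  show "card (G \<inter> insert m M) \<le> card (G \<inter> Y)"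
    using card_ins_atom[OF G E m fM] le G lt by (cases "G = E") auto
qed

lemma greedy_ext:
  assumes hB: "\<forall>b\<in>B. b \<subseteq> {1..n}" and n1: "1 \<le> n" and a: "a \<subseteq> {1..n}"
    and M: "M \<subseteq> {1..n}" and cM: "card M < r"
    and Y: "Y \<subseteq> {1..n}" and cY: "card Y = r"
    and mx: "\<forall>Z. Z \<subseteq> {1..n} \<longrightarrow> card Z = card Y \<longrightarrow> Fv n B Z \<le> Fv n B Y"
    and R: "Rrel n B a Y" and le: "\<forall>D\<in>Ats n B. card (D \<inter> M) \<le> card (D \<inter> Y)"
  shows "\<exists>m Y'. greedy_step n B M m \<and> Y' \<subseteq> {1..n} \<and> card Y' = r \<and> Fv n B Y' = Fv n B Y
           \<and> Rrel n B a Y' \<and> (\<forall>D\<in>Ats n B. card (D \<inter> insert m M) \<le> card (D \<inter> Y'))"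
proof -
  have fM: "finite M" using M finite_subset by blast
  obtain D0 where D0: "D0 \<in> Ats n B" "card (D0 \<inter> M) < card (D0 \<inter> Y)"
  proof -
    have "\<exists>D\<in>Ats n B. card (D \<inter> M) < card (D \<inter> Y)"
    proof (rule ccontr)
      assume "\<not> ?thesis"
      hence "\<forall>D\<in>Ats n B. card (D \<inter> M) = card (D \<inter> Y)" using le by (meson le_neq_implies_less)
      hence "(\<Sum>D\<in>Ats n B. card (D \<inter> M)) = (\<Sum>D\<in>Ats n B. card (D \<inter> Y))" by (intro sum.cong) auto
      hence "card M = card Y" using card_sum_Ats[OF M, of B] card_sum_Ats[OF Y, of B] by simp
      thus False using cM cY by simp
    qed
    thus ?thesis using that by blast
  qed
  obtain Es where Es: "Es \<in> Ats n B" "score Es M = max_score n B M"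
    using max_attained[OF hB n1] by blast
  have scD: "\<And>G. G \<in> Ats n B \<Longrightarrow> score G M = rt (card G) (card (G \<inter> M))"
    using score_rt Ats_finD by blast
  have cle: "\<And>G X. G \<in> Ats n B \<Longrightarrow> card (G \<inter> X) \<le> card G"
    using Ats_finD card_mono by (metis Int_lower1)
  obtain D where D: "D \<in> Ats n B" "card (D \<inter> M) < card (D \<inter> Y)" "score D M = max_score n B M"
  proof (cases "card (Es \<inter> M) < card (Es \<inter> Y)")
    case True thus ?thesis using that Es by blast
  next
    case False
    hence eqE: "card (Es \<inter> M) = card (Es \<inter> Y)" using le Es(1) by (meson le_neq_implies_less)
    have pos: "0 < rt (card D0) (card (D0 \<inter> M))"
      using D0 cle[OF D0(1), of Y] by (intro rt_pos) linarith
    have sD0: "score D0 M \<le> max_score n B M" using score_le_max[OF hB D0(1)] .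
    have ltE: "card (Es \<inter> Y) < card Es"
    proof (rule ccontr)
      assume "\<not> ?thesis"
      hence "card (Es \<inter> Y) = card Es" using cle[OF Es(1)] by (meson le_neq_implies_less)
      hence "score Es M = 0" using scD[OF Es(1)] eqE by (simp add: rt_def)
      thus False using Es(2) sD0 pos scD[OF D0(1)] by simp
    qed
    obtain w where w: "w \<in> Es" "w \<notin> Y"
    proof -
      have "\<not> Es \<subseteq> Y"
      proof
        assume "Es \<subseteq> Y"
        hence "Es \<inter> Y = Es" by blast
        thus False using ltE by simp
      qed
      thus ?thesis using that by blast
    qed
    obtain u where u: "u \<in> D0 \<inter> Y"
      using D0(2) by (metis card.empty ex_in_conv less_nat_zero_code)
    have neq: "D0 \<noteq> Es" using D0(2) eqE by auto
    have "rt (card Es) (card (Es \<inter> Y)) \<le> rt (card D0) (card (D0 \<inter> Y) - 1)"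
      using max_LO_pair[OF Y _ D0(1) Es(1) neq u w] mx by blast
    also have "\<dots> \<le> rt (card D0) (card (D0 \<inter> M))" by (rule rt_mono) (use D0 in linarith)
    finally have "max_score n B M \<le> score D0 M"
      using Es(2) scD[OF Es(1)] scD[OF D0(1)] eqE by simp
    hence "score D0 M = max_score n B M" using sD0 by simp
    thus ?thesis using that D0 by blast
  qed
  obtain m0 where m0: "m0 \<in> D" "m0 \<notin> M"
  proof -
    have "\<not> D \<subseteq> M"
    proof
      assume "D \<subseteq> M"
      hence "D \<inter> M = D" by blast
      thus False using D(2) cle[OF D(1), of Y] by simp
    qed
    thus ?thesis using that by blast
  qed
  have m0S: "m0 \<in> {1..n}" using m0 Ats_sub[OF D(1)] by blast
  have m0C: "m0 \<in> greedy_cands n B M"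
    unfolding greedy_cands_def pt_orbits_eq[OF hB] using m0 m0S D by blast
  show ?thesis
  proof (cases "max_score n B M = 1")
    case False
    have "greedy_step n B M m0" unfolding greedy_step_def using m0C False by blast
    moreover have "\<forall>G\<in>Ats n B. card (G \<inter> insert m0 M) \<le> card (G \<inter> Y)"
      using counts_step[OF M D(1) m0 le D(2)] .
    ultimately show ?thesis using Y cY R by blast
  next
    case True
    obtain m where m: "m \<in> greedy_cands n B M"
      and mmin: "\<forall>m'. m' \<in> greedy_cands n B M \<longrightarrow> card (nbhd B m) \<le> card (nbhd B m')"
      using ex_has_least_nat[of "\<lambda>x. x \<in> greedy_cands n B M" m0 "\<lambda>x. card (nbhd B x)"] m0C by blast
    have gs: "greedy_step n B M m" unfolding greedy_step_def using m mmin by blast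
    have mc: "m \<in> {1..n} - M \<and> (\<exists>D\<in>Ats n B. m \<in> D \<and> score D M = max_score n B M)"
      using m unfolding greedy_cands_def pt_orbits_eq[OF hB] mem_Collect_eq .
    hence mS: "m \<in> {1..n}" and mM: "m \<notin> M" by auto
    obtain E where E: "E \<in> Ats n B" "m \<in> E" "score E M = 1"
      using mc True by auto
    show ?thesis
    proof (cases "card (E \<inter> M) < card (E \<inter> Y)")
      case True
      thus ?thesis using counts_step[OF M E(1) E(2) mM le True] gs Y cY R by blast
    next
      case False
      hence eqE: "card (E \<inter> M) = card (E \<inter> Y)" using le E(1) by (meson le_neq_implies_less)
      have rE: "rt (card E) (card (E \<inter> M)) = 1" using E(3) scD[OF E(1)] by simp
      hence dE: "card E = 2 * card (E \<inter> M) + 1" by (simp add: rt_eq1)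
      have rD: "rt (card D) (card (D \<inter> M)) = 1" using D(3) True scD[OF D(1)] by simp
      hence dD: "card D = 2 * card (D \<inter> M) + 1" by (simp add: rt_eq1)
      have neq: "D \<noteq> E" using D(2) eqE by auto
      obtain u where u: "u \<in> D \<inter> Y"
        using D(2) by (metis card.empty ex_in_conv less_nat_zero_code)
      obtain w where w: "w \<in> E" "w \<notin> Y"
      proof -
        have "\<not> E \<subseteq> Y"
        proof
          assume "E \<subseteq> Y"
          hence "E \<inter> Y = E" by blast
          thus False using dE eqE by simp
        qed
        thus ?thesis using that by blast
      qed
      have "rt (card E) (card (E \<inter> Y)) \<le> rt (card D) (card (D \<inter> Y) - 1)"
        using max_LO_pair[OF Y _ D(1) E(1) neq u w] mx by blast
      hence "1 \<le> rt (card D) (card (D \<inter> Y) - 1)" using rE eqE by simp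
      hence "2 * (card (D \<inter> Y) - 1) + 1 \<le> card D" by (simp add: rt_ge1)
      hence yD: "card (D \<inter> Y) = Suc (card (D \<inter> M))" using dD D(2) by linarith
      define Y' where "Y' = insert w (Y - {u})"
      note sf = swap_facts[OF Y D(1) E(1) neq u w, folded Y'_def]
      have sw: "real (Fv n B Y') * rt (card D) (card (D \<inter> Y) - 1)
           = real (Fv n B Y) * rt (card E) (card (E \<inter> Y))"
        unfolding Y'_def using swap_F[OF Y D(1) E(1) neq u w] .
      hence "Fv n B Y' = Fv n B Y" using rE rD eqE yD by simp
      moreover have "Rrel n B a Y'"
        unfolding Rrel_def
      proof
        fix G assume G: "G \<in> Ats n B"
        have caG: "card (G \<inter> a) \<le> card G" using cle[OF G] .
        have RG: "card (G \<inter> Y) = card (G \<inter> a) \<or> card (G \<inter> Y) = card G - card (G \<inter> a)"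
          using R G unfolding Rrel_def by blast
        show "card (G \<inter> Y') = card (G \<inter> a) \<or> card (G \<inter> Y') = card G - card (G \<inter> a)"
        proof (cases "G = D")
          case True
          have "card (G \<inter> Y') = card G - card (G \<inter> Y)" using sf(1) True yD dD by simp
          thus ?thesis using RG caG by linarith
        next
          case GD: False
          show ?thesis
          proof (cases "G = E")
            case True
            have "card (G \<inter> Y') = card G - card (G \<inter> Y)" using sf(2) True eqE dE by simp
            thus ?thesis using RG caG by linarith
          next
            case False
            thus ?thesis using sf(3)[OF G GD False] RG by simp
          qed
        qed
      qed
      moreover have "\<forall>G\<in>Ats n B. card (G \<inter> insert m M) \<le> card (G \<inter> Y')"
      proof
        fix G assume G: "G \<in> Ats n B"
        show "card (G \<inter> insert m M) \<le> card (G \<inter> Y')"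
        proof (cases "G = E")
          case True
          thus ?thesis using card_ins_atom[OF G E(1) E(2) mM fM] sf(2) eqE by simp
        next
          case GE: False
          show ?thesis
          proof (cases "G = D")
            case True
            thus ?thesis using card_ins_atom[OF G E(1) E(2) mM fM] GE sf(1) yD by simp
          next
            case False
            thus ?thesis using card_ins_atom[OF G E(1) E(2) mM fM] GE sf(3)[OF G False GE] bspec[OF le G] by simp
          qed
        qed
      qed
      ultimately show ?thesis using gs sf(4,5) cY by blast
    qed
  qed
qed

lemma build_greedy:
  assumes hB: "\<forall>b\<in>B. b \<subseteq> {1..n}" and n1: "1 \<le> n" and a: "a \<subseteq> {1..n}" and ca: "card a = r"
    and mxa: "\<forall>Z. Z \<subseteq> {1..n} \<longrightarrow> card Z = r \<longrightarrow> Fv n B Z \<le> Fv n B a"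
  shows "k \<le> r \<Longrightarrow> \<exists>ms. length ms = k \<and> (\<forall>j<k. greedy_step n B (set (take j ms)) (ms ! j))
     \<and> set ms \<subseteq> {1..n} \<and> card (set ms) = k
     \<and> (\<exists>Y. Y \<subseteq> {1..n} \<and> card Y = r \<and> Fv n B Y = Fv n B a \<and> Rrel n B a Y
           \<and> (\<forall>D\<in>Ats n B. card (D \<inter> set ms) \<le> card (D \<inter> Y)))"
proof (induction k)
  case 0
  have "Rrel n B a a" unfolding Rrel_def by blast
  thus ?case using a ca by (intro exI[of _ "[]"]) auto
next
  case (Suc k)
  hence k: "k < r" by simp
  then obtain ms Y where ms: "length ms = k" "\<forall>j<k. greedy_step n B (set (take j ms)) (ms ! j)"
      "set ms \<subseteq> {1..n}" "card (set ms) = k"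
    and Y: "Y \<subseteq> {1..n}" "card Y = r" "Fv n B Y = Fv n B a" "Rrel n B a Y"
      "\<forall>D\<in>Ats n B. card (D \<inter> set ms) \<le> card (D \<inter> Y)"
    using Suc.IH by auto
  have mxY: "\<forall>Z. Z \<subseteq> {1..n} \<longrightarrow> card Z = card Y \<longrightarrow> Fv n B Z \<le> Fv n B Y"
    using mxa Y(2,3) by simp
  obtain m Y' where g: "greedy_step n B (set ms) m" and Y': "Y' \<subseteq> {1..n}" "card Y' = r"
    "Fv n B Y' = Fv n B Y" "Rrel n B a Y'" "\<forall>D\<in>Ats n B. card (D \<inter> insert m (set ms)) \<le> card (D \<inter> Y')"
    using greedy_ext[OF hB n1 a ms(3) _ Y(1,2) mxY Y(4,5)] ms(4) k by blast
  note gd = greedy_step_D[OF hB g]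
  let ?ms = "ms @ [m]"
  have st: "\<forall>j<Suc k. greedy_step n B (set (take j ?ms)) (?ms ! j)"
  proof (intro allI impI)
    fix j assume j: "j < Suc k"
    show "greedy_step n B (set (take j ?ms)) (?ms ! j)"
    proof (cases "j < k")
      case True
      have "take j ?ms = take j ms" using True ms(1) by simp
      moreover have "?ms ! j = ms ! j" using True ms(1) by (simp add: nth_append)
      ultimately show ?thesis using ms(2) True by simp
    next
      case False
      hence "j = k" using j by simp
      thus ?thesis using g ms(1) by (simp add: nth_append)
    qed
  qed
  have "set ?ms = insert m (set ms)" by simp
  moreover have "card (insert m (set ms)) = Suc k" using gd(2) ms(4) by simp
  ultimately show ?case using st ms(1,3) gd(1) Y' Y(3)
    by (intro exI[of _ ?ms]) auto
qed

lemma iso_from_counts: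
  assumes hB: "\<forall>b\<in>B. b \<subseteq> {1..n}" and a: "a \<subseteq> {1..n}" and a': "a' \<subseteq> {1..n}"
    and R: "Rrel n B a a'"
  shows "perm_grp n (set_stab (ptstab n B) a) \<cong> perm_grp n (set_stab (ptstab n B) a')"
proof -
  define Ysel where "Ysel = (\<lambda>D. if card (D \<inter> a') = card (D \<inter> a) then D \<inter> a' else D - a')"
  have Hex: "\<forall>D\<in>Ats n B. \<exists>h. bij_betw h D D \<and> (\<forall>y\<in>D. y \<in> D \<inter> a \<longleftrightarrow> h y \<in> Ysel D)"
  proof
    fix D assume D: "D \<in> Ats n B"
    have fD: "finite D" using Ats_finD[OF D] .
    have cle: "card (D \<inter> a) \<le> card D" "card (D \<inter> a') \<le> card D" using fD by (simp_all add: card_mono)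
    have RD: "card (D \<inter> a') = card (D \<inter> a) \<or> card (D \<inter> a') = card D - card (D \<inter> a)"
      using R D unfolding Rrel_def by blast
    have "card (D \<inter> a) = card (Ysel D)"
    proof (cases "card (D \<inter> a') = card (D \<inter> a)")
      case True thus ?thesis unfolding Ysel_def by simp
    next
      case False
      hence "card (D \<inter> a') = card D - card (D \<inter> a)" using RD by simp
      moreover have "card (D - a') = card D - card (D \<inter> a')" using fD by (simp add: card_Diff_subset_Int)
      ultimately show ?thesis unfolding Ysel_def using False cle by simp
    qed
    moreover have "Ysel D \<subseteq> D" unfolding Ysel_def by auto
    ultimately show "\<exists>h. bij_betw h D D \<and> (\<forall>y\<in>D. y \<in> D \<inter> a \<longleftrightarrow> h y \<in> Ysel D)"
      using bij_split[OF fD, of "D \<inter> a" "Ysel D"] by blast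
  qed
  then obtain H where H: "\<forall>D\<in>Ats n B. bij_betw (H D) D D \<and> (\<forall>y\<in>D. y \<in> D \<inter> a \<longleftrightarrow> H D y \<in> Ysel D)"
    by metis
  have Hb: "\<forall>D\<in>Ats n B. bij_betw (H D) D D" using H by blast
  define \<sigma> where "\<sigma> = (\<lambda>x. if x \<in> {1..n} then H (atm n B x) x else x)"
  have bp1: "\<sigma> permutes {1..n}" using build_perm(1)[OF Hb] unfolding \<sigma>_def .
  have bp2: "\<forall>x\<in>{1..n}. \<sigma> x \<in> atm n B x" using build_perm(2)[OF Hb] unfolding \<sigma>_def .
  have bp3: "\<forall>x\<in>{1..n}. \<sigma> x = H (atm n B x) x" using build_perm(3)[OF Hb] unfolding \<sigma>_def .
  have hB1: "\<forall>b\<in>insert a B. b \<subseteq> {1..n}" using hB a by blast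
  have hB2: "\<forall>b\<in>insert a' B. b \<subseteq> {1..n}" using hB a' by blast
  have c: "\<forall>x\<in>{1..n}. \<forall>y\<in>{1..n}. y \<in> atm n (insert a B) x \<longleftrightarrow> \<sigma> y \<in> atm n (insert a' B) (\<sigma> x)"
  proof (intro ballI)
    fix x y assume x: "x \<in> {1..n}" and y: "y \<in> {1..n}"
    have sx: "\<sigma> x \<in> {1..n}" "\<sigma> y \<in> {1..n}" using bp2 x y atm_sub by blast+
    have ax: "atm n B (\<sigma> x) = atm n B x" using atm_eq[OF x] bp2 x by blast
    have ay: "atm n B (\<sigma> y) = atm n B y" using atm_eq[OF y] bp2 y by blast
    have e1: "\<sigma> y \<in> atm n B (\<sigma> x) \<longleftrightarrow> y \<in> atm n B x"
      using atm_iff[OF sx(1) sx(2), of B] atm_iff[OF x y, of B] ax ay by simp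
    have e2: "(y \<in> a \<longleftrightarrow> x \<in> a) \<longleftrightarrow> (\<sigma> y \<in> a' \<longleftrightarrow> \<sigma> x \<in> a')" if yx: "y \<in> atm n B x"
    proof -
      let ?D = "atm n B x"
      have D: "?D \<in> Ats n B" using x by blast
      have xD: "x \<in> ?D" using atm_self[OF x] .
      have ateq: "atm n B y = ?D" using atm_eq[OF x yx] .
      have s1: "\<sigma> x = H ?D x" using bp3 x by simp
      have s2: "\<sigma> y = H ?D y" using bp3 y ateq by simp
      have hx: "x \<in> ?D \<inter> a \<longleftrightarrow> H ?D x \<in> Ysel ?D" using H D xD by blast
      have hy: "y \<in> ?D \<inter> a \<longleftrightarrow> H ?D y \<in> Ysel ?D" using H D yx by blast
      have inD: "H ?D x \<in> ?D" "H ?D y \<in> ?D" using Hb D xD yx bij_betwE by blast+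
      have "(y \<in> a \<longleftrightarrow> x \<in> a) \<longleftrightarrow> (H ?D y \<in> Ysel ?D \<longleftrightarrow> H ?D x \<in> Ysel ?D)"
        using hx hy xD yx by blast
      also have "\<dots> \<longleftrightarrow> (H ?D y \<in> a' \<longleftrightarrow> H ?D x \<in> a')"
        unfolding Ysel_def using inD by (cases "card (?D \<inter> a') = card (?D \<inter> a)") auto
      finally show ?thesis using s1 s2 by simp
    qed
    show "y \<in> atm n (insert a B) x \<longleftrightarrow> \<sigma> y \<in> atm n (insert a' B) (\<sigma> x)"
      unfolding atm_insert using e1 e2 by blast
  qed
  show ?thesis unfolding stab_ins using conj_iso[OF hB1 hB2 bp1 c] .
qed

theorem lemma2p2:
  fixes n r :: nat and B :: "nat set set" and a :: "nat set"
  assumes "n > 2 * r" and "2 * r \<ge> 4"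
    and "B \<subseteq> Omega n r"
    and "a \<in> Omega n r"
  shows "(\<forall>b \<in> Omega n r. card (set_orbit (ptstab n B) b) \<le> card (set_orbit (ptstab n B) a))
     \<longleftrightarrow> (\<exists>a'. metagreedy_output n r B a' \<and>
            perm_grp n (set_stab (ptstab n B) a) \<cong> perm_grp n (set_stab (ptstab n B) a'))"
proof -
  have Om: "\<And>X. X \<in> Omega n r \<longleftrightarrow> X \<subseteq> {1..n} \<and> card X = r" unfolding Omega_def by simp
  have hB: "\<forall>b\<in>B. b \<subseteq> {1..n}" using assms(3) Om by blast
  have a: "a \<subseteq> {1..n}" and ca: "card a = r" using assms(4) Om by blast+
  have n1: "1 \<le> n" using assms(1,2) by linarith
  have orbF: "card (set_orbit (ptstab n B) X) = Fv n B X" if X: "X \<subseteq> {1..n}" for X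
    unfolding orbit_char[OF hB X] Fv_def by (rule count_sets)
  have Gsub: "subgroup (ptstab n B) (sym_group n)" by (rule ptstab_subgroup)
  have stab_fin: "finite (set_stab (ptstab n B) X)" for X
  proof (rule finite_subset)
    show "set_stab (ptstab n B) X \<subseteq> {p. p permutes {1..n}}"
      unfolding set_stab_def ptstab_def sym_group_carrier by blast
    show "finite {p. p permutes {1..n}}" by (rule finite_permutations) simp
  qed
  have stab_pos: "0 < card (set_stab (ptstab n B) X)" for X
  proof -
    have "id \<in> set_stab (ptstab n B) X"
      unfolding set_stab_def ptstab_def sym_group_carrier by (simp add: permutes_id)
    thus ?thesis using stab_fin[of X] card_gt_0_iff by blast
  qed
  show ?thesis
  proof
    assume L: "\<forall>b \<in> Omega n r. card (set_orbit (ptstab n B) b) \<le> card (set_orbit (ptstab n B) a)"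
    have mxa: "\<forall>Z. Z \<subseteq> {1..n} \<longrightarrow> card Z = r \<longrightarrow> Fv n B Z \<le> Fv n B a"
    proof (intro allI impI)
      fix Z assume Z: "Z \<subseteq> {1..n}" "card Z = r"
      hence "Z \<in> Omega n r" using Om by blast
      thus "Fv n B Z \<le> Fv n B a" using L orbF[OF Z(1)] orbF[OF a] by metis
    qed
    obtain ms Y where ms: "length ms = r" "\<forall>j<r. greedy_step n B (set (take j ms)) (ms ! j)"
      "set ms \<subseteq> {1..n}" "card (set ms) = r"
      and Y: "Y \<subseteq> {1..n}" "card Y = r" "Rrel n B a Y"
      "\<forall>D\<in>Ats n B. card (D \<inter> set ms) \<le> card (D \<inter> Y)"
    proof -
      obtain ms where mm: "length ms = r \<and> (\<forall>j<r. greedy_step n B (set (take j ms)) (ms ! j))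
        \<and> set ms \<subseteq> {1..n} \<and> card (set ms) = r
        \<and> (\<exists>Y. Y \<subseteq> {1..n} \<and> card Y = r \<and> Fv n B Y = Fv n B a \<and> Rrel n B a Y
           \<and> (\<forall>D\<in>Ats n B. card (D \<inter> set ms) \<le> card (D \<inter> Y)))"
        using build_greedy[OF hB n1 a ca mxa order_refl] by (elim exE) (rule that)
      have m1: "length ms = r" and m2: "\<forall>j<r. greedy_step n B (set (take j ms)) (ms ! j)"
        and m3: "set ms \<subseteq> {1..n}" and m4: "card (set ms) = r" using mm by simp_all
      have ex: "\<exists>Y. Y \<subseteq> {1..n} \<and> card Y = r \<and> Fv n B Y = Fv n B a \<and> Rrel n B a Y
           \<and> (\<forall>D\<in>Ats n B. card (D \<inter> set ms) \<le> card (D \<inter> Y))" using mm by (elim conjE)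
      from ex obtain Y where "Y \<subseteq> {1..n}" "card Y = r" "Rrel n B a Y"
           "\<forall>D\<in>Ats n B. card (D \<inter> set ms) \<le> card (D \<inter> Y)" by (elim exE conjE) simp
      thus ?thesis using that m1 m2 m3 m4 by blast
    qed
    have "(\<Sum>D\<in>Ats n B. card (D \<inter> set ms)) = (\<Sum>D\<in>Ats n B. card (D \<inter> Y))"
      using card_sum_Ats[OF ms(3), of B] card_sum_Ats[OF Y(1), of B] ms(4) Y(2) by simp
    hence eqc: "\<forall>D\<in>Ats n B. card (D \<inter> set ms) = card (D \<inter> Y)"
      using sum_le_eq[OF Ats_fin Y(4)] by blast
    have R: "Rrel n B a (set ms)" using Y(3) eqc unfolding Rrel_def by simp
    have "metagreedy_output n r B (set ms)" unfolding metagreedy_output_def using ms(1,2) by blast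
    moreover have "perm_grp n (set_stab (ptstab n B) a) \<cong> perm_grp n (set_stab (ptstab n B) (set ms))"
      using iso_from_counts[OF hB a ms(3) R] .
    ultimately show "\<exists>a'. metagreedy_output n r B a' \<and>
            perm_grp n (set_stab (ptstab n B) a) \<cong> perm_grp n (set_stab (ptstab n B) a')" by blast
  next
    assume "\<exists>a'. metagreedy_output n r B a' \<and>
            perm_grp n (set_stab (ptstab n B) a) \<cong> perm_grp n (set_stab (ptstab n B) a')"
    then obtain a' where mo: "metagreedy_output n r B a'"
      and iso: "perm_grp n (set_stab (ptstab n B) a) \<cong> perm_grp n (set_stab (ptstab n B) a')" by blast
    obtain ms where ms: "length ms = r" "\<forall>j<r. greedy_step n B (set (take j ms)) (ms ! j)" "a' = set ms"
      using mo unfolding metagreedy_output_def by blast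
    have "set (take r ms) \<subseteq> {1..n} \<and> card (set (take r ms)) = r \<and> LO n B (set (take r ms))"
      using greedy_LO[OF hB ms(1,2)] by simp
    hence a': "a' \<subseteq> {1..n}" "card a' = r" "LO n B a'" using ms(1,3) by simp_all
    have cs: "card (set_stab (ptstab n B) a) = card (set_stab (ptstab n B) a')"
      using iso_same_card[OF iso] by (simp add: perm_grp_def)
    have "card (set_orbit (ptstab n B) a) * card (set_stab (ptstab n B) a) = card (ptstab n B)"
      using orbit_stab[OF Gsub a] .
    moreover have "card (set_orbit (ptstab n B) a') * card (set_stab (ptstab n B) a') = card (ptstab n B)"
      using orbit_stab[OF Gsub a'(1)] .
    ultimately have "card (set_orbit (ptstab n B) a) = card (set_orbit (ptstab n B) a')"
      using cs stab_pos[of a'] by (metis mult_right_cancel not_gr0)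
    hence oa: "card (set_orbit (ptstab n B) a) = Fv n B a'" using orbF[OF a'(1)] by simp
    show "\<forall>b \<in> Omega n r. card (set_orbit (ptstab n B) b) \<le> card (set_orbit (ptstab n B) a)"
    proof
      fix b assume "b \<in> Omega n r"
      hence b: "b \<subseteq> {1..n}" "card b = r" using Om by blast+
      have "Fv n B b \<le> Fv n B a'" using LO_max[OF a'(1) a'(3) b(1)] b(2) a'(2) by simp
      thus "card (set_orbit (ptstab n B) b) \<le> card (set_orbit (ptstab n B) a)" using oa orbF[OF b(1)] by simp
    qed
  qed
qed

end
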